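(* Let $\gamma$ be a smooth curve in the affine plane with strictly positive equi-affine curvature $\kappa$, and let $\mathscr{P}_\gamma$ be its osculating parabolic congruence, a curve in $(\mathrm{SL}(2),g)$. Then the full-affine arc-length of $\gamma$, $\int\sqrt{\kappa}\,\mathrm{d}s$, equals the pseudo-Riemannian arc-length $\int\sqrt{|g(\dot{\mathscr{P}}_\gamma,\dot{\mathscr{P}}_\gamma)|}\,\mathrm{d}t$ of $\mathscr{P}_\gamma$ (over corresponding parameter intervals).
   Context: The affine plane is $\mathbb{R}^2$ with area form $|u,v|=\det(u,v)$. For a nondegenerate curve parametrised by equi-affine arc-length $s$ (i.e. $|\gamma',\gamma''|=1$), $T=\gamma'$, $N=\gamma''$, and the equi-affine curvature $\kappa$ is defined by $\gamma'''=-\kappa\gamma'$; the full-affine arc-length element is $\mathrm{d}s_{\mathbf F}=\sqrt{\kappa}\,\mathrm{d}s$ (for $\kappa>0$). The osculating parabola of $\gamma$ at $\gamma(s_0)$ is the parabola $u\mapsto\gamma(s_0)+u\,T(s_0)+\tfrac{u^2}{2}N(s_0)$. A pointed parabola is a parabola together with a distinguished point on it; any two pointed parabolas are related by a unique orientation-preserving equi-affine transformation $p\mapsto Lp+b$ ($L\in\mathrm{SL}(2)$) mapping one to the other and distinguished point to distinguished point. Fix a standard pointed parabola. For an arbitrarily (regularly) parametrised curve $t\mapsto\gamma(t)$, let $\Phi(t)$ be the orientation-preserving equi-affine transformation carrying the standard pointed parabola to the osculating parabola of $\gamma$ at $\gamma(t)$ with distinguished point $\gamma(t)$; the osculating parabolic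 congruence is $\mathscr{P}_\gamma(t)=$ the linear part of $\Phi(t)$, an element of $\mathrm{SL}(2)$. The group $\mathrm{SL}(2)\subset\mathbb{R}^{2\times2}$ carries the bi-invariant Lorentzian metric $g(v_P,v_P)=-\det(v_P)$ for $v_P\in T_P\mathrm{SL}(2)\subseteq\mathbb{R}^{2\times2}$. *)

theory Defs
  imports "HOL-Analysis.Analysis"
begin

definition area :: "real^2 \<Rightarrow> real^2 \<Rightarrow> real" where
  "area u v = u$1 * v$2 - u$2 * v$1"

definition vderiv :: "real set \<Rightarrow> (real \<Rightarrow> 'a::real_normed_vector) \<Rightarrow> real \<Rightarrow> 'a" where
  "vderiv S f = (\<lambda>t. vector_derivative f (at t within S))"

definition smooth_on :: "real set \<Rightarrow> (real \<Rightarrow> 'a::real_normed_vector) \<Rightarrow> bool" where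
  "smooth_on S f \<longleftrightarrow> (\<forall>k. \<forall>t\<in>S. ((vderiv S ^^ k) f) differentiable (at t within S))"

definition std_parabola :: "(real^2) set" where
  "std_parabola = {p. p$2 = (p$1)^2 / 2}"

definition std_point :: "real^2" where
  "std_point = 0"

text \<open>Osculating parabola of an equi-affinely arc-length parametrised curve c at c(s):
  u \<mapsto> c(s) + u T(s) + u^2/2 N(s), with T = c', N = c''.\<close>
definition osc_parabola :: "real set \<Rightarrow> (real \<Rightarrow> real^2) \<Rightarrow> real \<Rightarrow> (real^2) set" where
  "osc_parabola S c s =
     range (\<lambda>u. c s + u *\<^sub>R vderiv S c s + (u^2 / 2) *\<^sub>R (vderiv S ^^ 2) c s)"

definition osc_congr :: "real set \<Rightarrow> (real \<Rightarrow> real^2) \<Rightarrow> real \<Rightarrow> real^2^2" where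
  "osc_congr S c s = (THE L. det L = 1 \<and>
      (\<exists>b. (\<lambda>p. L *v p + b) ` std_parabola = osc_parabola S c s \<and> L *v std_point + b = c s))"

definition gSL :: "real^2^2 \<Rightarrow> real" where
  "gSL v = - det v"

end

theory Submission
  imports Defs
begin

definition Mk :: "real^2 \<Rightarrow> real^2 \<Rightarrow> real^2^2" where
  "Mk v w = (\<chi> i j. if j = 1 then v$i else w$i)"

lemma Mk_mult: "Mk v w *v p = p$1 *\<^sub>R v + p$2 *\<^sub>R w"
  by (simp add: vec_eq_iff Mk_def matrix_vector_mult_def sum_2 forall_2 mult.commute)

lemma det_Mk: "det (Mk v w) = area v w"
  by (simp add: det_2 Mk_def area_def)

lemma Mk_split: "Mk v w = Mk v 0 + Mk 0 w"
  by (simp add: vec_eq_iff Mk_def forall_2)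

lemma Mk_scale: "Mk (a *\<^sub>R v) (a *\<^sub>R w) = a *\<^sub>R Mk v w"
  by (simp add: vec_eq_iff Mk_def forall_2)

lemma bl1: "bounded_linear (\<lambda>v. Mk v 0)"
  apply (rule linear_conv_bounded_linear[THEN iffD1])
  apply (rule linearI) by (simp_all add: vec_eq_iff Mk_def forall_2)

lemma bl2: "bounded_linear (\<lambda>v. Mk 0 v)"
  apply (rule linear_conv_bounded_linear[THEN iffD1])
  apply (rule linearI) by (simp_all add: vec_eq_iff Mk_def forall_2)

lemma Mk_deriv:
  assumes "(f has_vector_derivative f') F" "(g has_vector_derivative g') F"
  shows "((\<lambda>x. Mk (f x) (g x)) has_vector_derivative Mk f' g') F"
proof -
  have "((\<lambda>x. Mk (f x) 0 + Mk 0 (g x)) has_vector_derivative Mk f' 0 + Mk 0 g') F"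
    by (intro has_vector_derivative_add bounded_linear.has_vector_derivative[OF bl1]
        bounded_linear.has_vector_derivative[OF bl2] assms)
  then show ?thesis by (simp add: Mk_split[symmetric])
qed

lemma decomp:
  fixes T N v :: "real^2" assumes "area T N = 1"
  shows "v = area v N *\<^sub>R T + area T v *\<^sub>R N"
proof -
  have "v$1 = (v$1*N$2 - v$2*N$1)*T$1 + (T$1* v$2-T$2* v$1)*N$1 \<and> v$2 = (v$1*N$2 - v$2*N$1)*T$2 + (T$1* v$2-T$2* v$1)*N$2"
    using assms unfolding area_def by algebra
  then show ?thesis by (simp add: vec_eq_iff forall_2 area_def)
qed


lemma poly_zero:
  fixes al be ga de :: real
  assumes "\<forall>x. (x*al + x^2/2*ga)^2/2 = x*be + x^2/2*de"
  shows "ga = 0 \<and> be = 0 \<and> de = al^2"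
proof -
  have e1: "(al + ga/2)^2/2 = be + de/2" using assms[rule_format, of 1] by simp
  have e2: "(-al + ga/2)^2/2 = -be + de/2" using assms[rule_format, of "-1"] by simp
  have e3: "(2*al + 2*ga)^2/2 = 2*be + 2*de" using assms[rule_format, of 2] by (simp add: power2_eq_square)
  have e4: "(-2*al + 2*ga)^2/2 = -2*be + 2*de" using assms[rule_format, of "-2"] by (simp add: power2_eq_square)
  have f1: "al^2/2 + (al*ga)/2 + ga^2/8 = be + de/2" using e1 by (simp add: power2_eq_square field_simps)
  have f2: "al^2/2 - (al*ga)/2 + ga^2/8 = -be + de/2" using e2 by (simp add: power2_eq_square field_simps)
  have f3: "2*al^2 + 4*(al*ga) + 2*ga^2 = 2*be + 2*de" using e3 by (simp add: power2_eq_square field_simps)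
  have f4: "2*al^2 - 4*(al*ga) + 2*ga^2 = -2*be + 2*de" using e4 by (simp add: power2_eq_square field_simps)
  have "ga^2 = 0" "al*ga = 0" "be = 0" "de = al^2"
    using f1 f2 f3 f4 by linarith+
  then show ?thesis by simp
qed

lemma cube1: "(a::real)^3 = 1 \<Longrightarrow> a = 1"
  by (metis odd_real_root_power_cancel odd_numeral power_one real_root_one)

lemma osc_unique:
  fixes T N b c0 :: "real^2" and L :: "real^2^2"
  assumes TN: "area T N = 1" and dL: "det L = 1"
    and img: "(\<lambda>p. L *v p + b) ` std_parabola = range (\<lambda>u. c0 + u *\<^sub>R T + (u^2/2) *\<^sub>R N)"
    and pt: "L *v std_point + b = c0"
  shows "L = Mk T N"
proof -
  have b: "b = c0" using pt by (simp add: std_point_def)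
  define a where "a = (\<chi> i. L$i$1)"
  define d where "d = (\<chi> i. L$i$2)"
  have LM: "L = Mk a d" by (simp add: vec_eq_iff Mk_def forall_2 a_def d_def)
  define al where "al = area a N"
  define ga where "ga = area d N"
  define be where "be = area T a"
  define de where "de = area T d"
  have "\<forall>x. (x*al + x^2/2*ga)^2/2 = x*be + x^2/2*de"
  proof
    fix x :: real
    define p :: "real^2" where "p = vector [x, x^2/2]"
    have "p \<in> std_parabola" by (simp add: p_def std_parabola_def)
    then have "L *v p + b \<in> range (\<lambda>u. c0 + u *\<^sub>R T + (u^2/2) *\<^sub>R N)" using img by blast
    then obtain u where u: "L *v p + b = c0 + u *\<^sub>R T + (u^2/2) *\<^sub>R N" by blast
    then have "x *\<^sub>R a + (x^2/2) *\<^sub>R d = u *\<^sub>R T + (u^2/2) *\<^sub>R N"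
      by (simp add: LM Mk_mult p_def b)
    then have c1: "x * a$1 + x^2/2 * d$1 = u * T$1 + u^2/2 * N$1"
         and c2: "x * a$2 + x^2/2 * d$2 = u * T$2 + u^2/2 * N$2"
      by (simp_all add: vec_eq_iff forall_2)
    have h1: "x*al + x^2/2*ga = u"
    proof -
      have "x*al + x^2/2*ga = (x * a$1 + x^2/2 * d$1) * N$2 - (x * a$2 + x^2/2 * d$2) * N$1"
        by (simp add: al_def ga_def area_def algebra_simps)
      also have "\<dots> = (u * T$1 + u^2/2 * N$1) * N$2 - (u * T$2 + u^2/2 * N$2) * N$1"
        unfolding c1 c2 by (rule refl)
      also have "\<dots> = u * area T N" by (simp add: area_def algebra_simps)
      finally show ?thesis using TN by simp
    qed
    have h2: "x*be + x^2/2*de = u^2/2"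
    proof -
      have "x*be + x^2/2*de = T$1 * (x * a$2 + x^2/2 * d$2) - T$2 * (x * a$1 + x^2/2 * d$1)"
        by (simp add: be_def de_def area_def algebra_simps)
      also have "\<dots> = T$1 * (u * T$2 + u^2/2 * N$2) - T$2 * (u * T$1 + u^2/2 * N$1)"
        unfolding c1 c2 by (rule refl)
      also have "\<dots> = u^2/2 * area T N" by (simp add: area_def algebra_simps)
      finally show ?thesis using TN by simp
    qed
    show "(x*al + x^2/2*ga)^2/2 = x*be + x^2/2*de" using h1 h2 by simp
  qed
  from poly_zero[OF this] have z: "ga = 0" "be = 0" "de = al^2" by auto
  have a: "a = al *\<^sub>R T" using decomp[OF TN, of a] z by (simp add: al_def be_def)
  have d: "d = al^2 *\<^sub>R N" using decomp[OF TN, of d] z by (simp add: ga_def de_def)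
  have "det L = al^3 * area T N"
    by (simp add: LM det_Mk a d area_def power3_eq_cube power2_eq_square algebra_simps)
  then have "al = 1" using dL TN cube1 by simp
  then show ?thesis using LM a d by simp
qed

lemma osc_exists:
  fixes T N c0 :: "real^2"
  shows "(\<lambda>p. Mk T N *v p + c0) ` std_parabola = range (\<lambda>u. c0 + u *\<^sub>R T + (u^2/2) *\<^sub>R N)"
proof
  show "(\<lambda>p. Mk T N *v p + c0) ` std_parabola \<subseteq> range (\<lambda>u. c0 + u *\<^sub>R T + (u^2/2) *\<^sub>R N)"
  proof
    fix y assume "y \<in> (\<lambda>p. Mk T N *v p + c0) ` std_parabola"
    then obtain p where p: "p$2 = (p$1)^2/2" "y = Mk T N *v p + c0" by (auto simp: std_parabola_def)
    then have "y = c0 + (p$1) *\<^sub>R T + ((p$1)^2/2) *\<^sub>R N" by (simp add: Mk_mult algebra_simps)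
    then show "y \<in> range (\<lambda>u. c0 + u *\<^sub>R T + (u^2/2) *\<^sub>R N)" by blast
  qed
  show "range (\<lambda>u. c0 + u *\<^sub>R T + (u^2/2) *\<^sub>R N) \<subseteq> (\<lambda>p. Mk T N *v p + c0) ` std_parabola"
  proof
    fix y assume "y \<in> range (\<lambda>u. c0 + u *\<^sub>R T + (u^2/2) *\<^sub>R N)"
    then obtain u where y: "y = c0 + u *\<^sub>R T + (u^2/2) *\<^sub>R N" by blast
    have "vector [u, u^2/2] \<in> std_parabola" by (simp add: std_parabola_def)
    moreover have "y = Mk T N *v vector [u, u^2/2] + c0" by (simp add: y Mk_mult algebra_simps)
    ultimately show "y \<in> (\<lambda>p. Mk T N *v p + c0) ` std_parabola" by blast
  qed
qed

lemma osc_congr_eq: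
  assumes "area (vderiv S c s) ((vderiv S ^^ 2) c s) = 1"
  shows "osc_congr S c s = Mk (vderiv S c s) ((vderiv S ^^ 2) c s)"
  unfolding osc_congr_def
proof (rule the_equality)
  show "det (Mk (vderiv S c s) ((vderiv S ^^ 2) c s)) = 1 \<and>
    (\<exists>b. (\<lambda>p. Mk (vderiv S c s) ((vderiv S ^^ 2) c s) *v p + b) ` std_parabola = osc_parabola S c s \<and>
         Mk (vderiv S c s) ((vderiv S ^^ 2) c s) *v std_point + b = c s)"
    using assms by (intro conjI exI[of _ "c s"]) (auto simp: det_Mk osc_parabola_def osc_exists std_point_def)
next
  fix L assume "det L = 1 \<and> (\<exists>b. (\<lambda>p. L *v p + b) ` std_parabola = osc_parabola S c s \<and> L *v std_point + b = c s)"
  then show "L = Mk (vderiv S c s) ((vderiv S ^^ 2) c s)"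
    using osc_unique[OF assms] unfolding osc_parabola_def by blast
qed


lemma smooth_hvd:
  assumes "smooth_on S f" "t \<in> S"
  shows "((vderiv S ^^ k) f has_vector_derivative (vderiv S ^^ Suc k) f t) (at t within S)"
proof -
  have "((vderiv S ^^ k) f) differentiable (at t within S)" using assms by (simp add: smooth_on_def)
  then show ?thesis by (simp add: vector_derivative_works vderiv_def)
qed

lemma smooth_cont:
  assumes "smooth_on S f"
  shows "continuous_on S ((vderiv S ^^ k) f)"
  using assms unfolding smooth_on_def
  by (simp add: continuous_on_eq_continuous_within differentiable_imp_continuous_within)

theorem mainTheorem6:
  fixes c :: "real \<Rightarrow> real^2" and \<kappa> :: "real \<Rightarrow> real" and \<phi> :: "real \<Rightarrow> real"
    and s0 s1 t0 t1 :: real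
  assumes "s0 < s1" and "t0 < t1"
    and c_smooth: "smooth_on {s0..s1} c"
    and arclength: "\<forall>s\<in>{s0..s1}. area (vderiv {s0..s1} c s) ((vderiv {s0..s1} ^^ 2) c s) = 1"
    and curvature: "\<forall>s\<in>{s0..s1}.
        (vderiv {s0..s1} ^^ 3) c s = - (\<kappa> s *\<^sub>R vderiv {s0..s1} c s)"
    and kappa_pos: "\<forall>s\<in>{s0..s1}. \<kappa> s > 0"
    and phi_smooth: "smooth_on {t0..t1} \<phi>"
    and phi_onto: "\<phi> ` {t0..t1} = {s0..s1}"
    and phi_regular: "\<forall>t\<in>{t0..t1}. vderiv {t0..t1} \<phi> t \<noteq> 0"
  shows "((\<lambda>t. sqrt \<bar>gSL (vderiv {t0..t1} (\<lambda>t'. osc_congr {s0..s1} c (\<phi> t')) t)\<bar>)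
           has_integral (integral {s0..s1} (\<lambda>s. sqrt (\<kappa> s)))) {t0..t1}"
proof -
  define S where "S = {s0..s1}"
  define I where "I = {t0..t1}"
  define T where "T = vderiv S c"
  define N where "N = (vderiv S ^^ 2) c"
  define Th where "Th = (vderiv S ^^ 3) c"
  define d where "d = vderiv I \<phi>"
  define f where "f = (\<lambda>s. sqrt (\<kappa> s))"
  have T1: "T = (vderiv S ^^ 1) c" by (simp add: T_def)
  have dI: "d = (vderiv I ^^ 1) \<phi>" by (simp add: d_def)
  have phiS: "\<And>t. t \<in> I \<Longrightarrow> \<phi> t \<in> S" using phi_onto S_def I_def by blast
  have area1: "\<And>s. s \<in> S \<Longrightarrow> area (T s) (N s) = 1" using arclength S_def T_def N_def by blast
  have curv: "\<And>s. s \<in> S \<Longrightarrow> Th s = - (\<kappa> s *\<^sub>R T s)" using curvature S_def T_def Th_def by blast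
  have osc: "\<And>s. s \<in> S \<Longrightarrow> osc_congr S c s = Mk (T s) (N s)"
    unfolding T_def N_def by (rule osc_congr_eq) (use arclength S_def in blast)
  have dM: "((\<lambda>s. Mk (T s) (N s)) has_vector_derivative Mk (N s) (- (\<kappa> s *\<^sub>R T s))) (at s within S)"
    if "s \<in> S" for s
  proof -
    have "(T has_vector_derivative N s) (at s within S)"
      using smooth_hvd[OF c_smooth[folded S_def] that, of 1] by (simp add: T1 N_def numeral_2_eq_2)
    moreover have "(N has_vector_derivative Th s) (at s within S)"
      using smooth_hvd[OF c_smooth[folded S_def] that, of 2] by (simp add: Th_def N_def numeral_3_eq_3 numeral_2_eq_2)
    ultimately show ?thesis using Mk_deriv curv[OF that] by metis
  qed
  have dphi: "(\<phi> has_vector_derivative d t) (at t within I)" if "t \<in> I" for t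
    using smooth_hvd[OF phi_smooth[folded I_def] that, of 0] by (simp add: d_def)
  have dP: "((\<lambda>t'. osc_congr S c (\<phi> t')) has_vector_derivative
        (d t *\<^sub>R Mk (N (\<phi> t)) (- (\<kappa> (\<phi> t) *\<^sub>R T (\<phi> t))))) (at t within I)" if "t \<in> I" for t
  proof -
    have "((\<lambda>s. Mk (T s) (N s)) has_vector_derivative Mk (N (\<phi> t)) (- (\<kappa> (\<phi> t) *\<^sub>R T (\<phi> t))))
          (at (\<phi> t) within \<phi> ` I)"
      using dM[OF phiS[OF that]] phi_onto S_def I_def by simp
    from vector_diff_chain_within[OF dphi[OF that] this]
    show ?thesis
      by (rule has_vector_derivative_transform[rotated 2]) (use that phiS osc in auto)
  qed
  have vP: "vderiv I (\<lambda>t'. osc_congr S c (\<phi> t')) t = d t *\<^sub>R Mk (N (\<phi> t)) (- (\<kappa> (\<phi> t) *\<^sub>R T (\<phi> t)))"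
    if "t \<in> I" for t
    unfolding vderiv_def I_def
    by (rule vector_derivative_within_closed_interval) (use dP[OF that] that \<open>t0 < t1\<close> I_def in auto)
  have integrand: "sqrt \<bar>gSL (vderiv I (\<lambda>t'. osc_congr S c (\<phi> t')) t)\<bar> = \<bar>d t\<bar> * f (\<phi> t)"
    if "t \<in> I" for t
  proof -
    have "gSL (vderiv I (\<lambda>t'. osc_congr S c (\<phi> t')) t) = - ((d t)^2 * \<kappa> (\<phi> t) * area (T (\<phi> t)) (N (\<phi> t)))"
      unfolding vP[OF that] gSL_def Mk_scale[symmetric] det_Mk
      by (simp add: area_def power2_eq_square algebra_simps)
    also have "\<dots> = - ((d t)^2 * \<kappa> (\<phi> t))" using area1[OF phiS[OF that]] by simp
    finally have gv: "gSL (vderiv I (\<lambda>t'. osc_congr S c (\<phi> t')) t) = - ((d t)^2 * \<kappa> (\<phi> t))" .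
    have "\<bar>gSL (vderiv I (\<lambda>t'. osc_congr S c (\<phi> t')) t)\<bar> = (d t)^2 * \<kappa> (\<phi> t)"
    proof -
      have "\<kappa> (\<phi> t) > 0" using kappa_pos phiS[OF that] S_def by blast
      then show ?thesis using gv by simp
    qed
    then show ?thesis by (simp add: f_def real_sqrt_mult)
  qed
  have kapeq: "\<And>s. s \<in> S \<Longrightarrow> \<kappa> s = area (N s) (Th s)"
  proof -
    fix s assume s: "s \<in> S"
    have "area (N s) (Th s) = \<kappa> s * area (T s) (N s)" using curv[OF s] by (simp add: area_def algebra_simps)
    then show "\<kappa> s = area (N s) (Th s)" using area1[OF s] by simp
  qed
  have fcont: "continuous_on S f"
  proof -
    have cN: "continuous_on S N" unfolding N_def using smooth_cont[OF c_smooth[folded S_def]] .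
    have cTh: "continuous_on S Th" unfolding Th_def using smooth_cont[OF c_smooth[folded S_def]] .
    have "continuous_on S (\<lambda>s. sqrt (area (N s) (Th s)))"
      unfolding area_def by (intro continuous_intros cN cTh)
    then show ?thesis unfolding f_def by (rule continuous_on_eq) (simp add: kapeq)
  qed
  have phicont: "continuous_on I \<phi>" using smooth_cont[OF phi_smooth[folded I_def], of 0] by simp
  have dcont: "continuous_on I d" unfolding dI using smooth_cont[OF phi_smooth[folded I_def]] .
  have dnz: "\<And>t. t \<in> I \<Longrightarrow> d t \<noteq> 0" using phi_regular I_def d_def by blast
  have fder: "\<And>x. x \<in> I - {} \<Longrightarrow> (\<phi> has_field_derivative d x) (at x within I)"
    using dphi by (simp add: has_real_derivative_iff_has_vector_derivative)
  have subst: "((\<lambda>x. d x *\<^sub>R f (\<phi> x)) has_integral (integral {\<phi> t0..\<phi> t1} f - integral {\<phi> t1..\<phi> t0} f)) I"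
    unfolding I_def
    by (rule has_integral_substitution_general[where c=s0 and d=s1])
       (use phi_onto fcont S_def phicont I_def fder \<open>t0 < t1\<close> in auto)
  have sign: "(\<forall>t\<in>I. d t > 0) \<or> (\<forall>t\<in>I. d t < 0)"
  proof (rule ccontr)
    assume "\<not> ?thesis"
    then obtain a b where ab: "a \<in> I" "b \<in> I" "d a \<le> 0" "d b \<ge> 0" by (auto simp: not_less)
    have "\<exists>x. min a b \<le> x \<and> x \<le> max a b \<and> d x = 0"
    proof (cases "a \<le> b")
      case True
      have "continuous_on {a..b} d" using dcont ab I_def by (auto intro: continuous_on_subset)
      then show ?thesis using IVT'[of d a 0 b] ab True by auto
    next
      case False
      have "continuous_on {b..a} d" using dcont ab I_def by (auto intro: continuous_on_subset)
      then show ?thesis using IVT2'[of d a 0 b] ab False by auto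
    qed
    then obtain x where "min a b \<le> x" "x \<le> max a b" "d x = 0" by blast
    moreover have "x \<in> I" using calculation ab I_def by auto
    ultimately show False using dnz by blast
  qed
  have ftc: "(d has_integral (\<phi> y - \<phi> x)) {x..y}" if "x \<in> I" "y \<in> I" "x \<le> y" for x y
  proof (rule fundamental_theorem_of_calculus[OF that(3)])
    fix z assume "z \<in> {x..y}"
    then have "z \<in> I" using that I_def by auto
    then show "(\<phi> has_vector_derivative d z) (at z within {x..y})"
    proof (rule has_vector_derivative_within_subset[OF dphi])
      show "{x..y} \<subseteq> I" using that I_def by auto
    qed
  qed
  have t0I: "t0 \<in> I" and t1I: "t1 \<in> I" using \<open>t0 < t1\<close> I_def by auto
  obtain ta where ta: "ta \<in> I" "\<phi> ta = s0" using phi_onto \<open>s0 < s1\<close> I_def by (metis atLeastAtMost_iff imageE order_less_imp_le order_refl)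
  obtain tb where tb: "tb \<in> I" "\<phi> tb = s1" using phi_onto \<open>s0 < s1\<close> I_def by (metis atLeastAtMost_iff imageE order_less_imp_le order_refl)
  have st0: "s0 \<le> \<phi> t0" "\<phi> t0 \<le> s1" "s0 \<le> \<phi> t1" "\<phi> t1 \<le> s1" using phiS t0I t1I S_def by auto
  have target: "((\<lambda>t. \<bar>d t\<bar> * f (\<phi> t)) has_integral integral S f) I"
    using sign
  proof
    assume pos: "\<forall>t\<in>I. d t > 0"
    have mono: "\<phi> x \<le> \<phi> y" if "x \<in> I" "y \<in> I" "x \<le> y" for x y
    proof -
      have "0 \<le> \<phi> y - \<phi> x"
      proof (rule has_integral_nonneg[OF ftc[OF that]])
        fix z assume "z \<in> {x..y}"
        then have "z \<in> I" using that I_def by auto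
        then show "0 \<le> d z" using pos by (simp add: less_imp_le)
      qed
      then show ?thesis by simp
    qed
    have "\<phi> t0 \<le> \<phi> ta" using mono[OF t0I ta(1)] ta I_def by auto
    then have e0: "\<phi> t0 = s0" using ta st0 by simp
    have "\<phi> tb \<le> \<phi> t1" using mono[OF tb(1) t1I] tb I_def by auto
    then have e1: "\<phi> t1 = s1" using tb st0 by simp
    have "((\<lambda>x. d x *\<^sub>R f (\<phi> x)) has_integral integral S f) I"
      using subst e0 e1 \<open>s0 < s1\<close> S_def by simp
    then show ?thesis by (rule has_integral_cong[THEN iffD1, rotated]) (use pos in auto)
  next
    assume neg: "\<forall>t\<in>I. d t < 0"
    have mono: "\<phi> y \<le> \<phi> x" if "x \<in> I" "y \<in> I" "x \<le> y" for x y
    proof -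
      have ni: "(- d has_integral - (\<phi> y - \<phi> x)) {x..y}" using has_integral_neg[OF ftc[OF that]] by (simp add: fun_Compl_def)
      have "0 \<le> - (\<phi> y - \<phi> x)"
      proof (rule has_integral_nonneg[OF ni])
        fix z assume "z \<in> {x..y}"
        then have "z \<in> I" using that I_def by auto
        then show "0 \<le> (- d) z" using neg by (simp add: less_imp_le)
      qed
      then show ?thesis by simp
    qed
    have "\<phi> ta \<le> \<phi> t0" using mono[OF t0I ta(1)] ta I_def by auto
    then have e0: "\<phi> t1 = s0" using ta st0 mono[OF ta(1) t1I] ta I_def by auto
    have "\<phi> t1 \<le> \<phi> tb" using mono[OF tb(1) t1I] tb I_def by auto
    then have e1: "\<phi> t0 = s1" using tb st0 mono[OF t0I tb(1)] tb I_def by auto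
    have "((\<lambda>x. d x *\<^sub>R f (\<phi> x)) has_integral - integral S f) I"
      using subst e0 e1 \<open>s0 < s1\<close> S_def by simp
    from has_integral_neg[OF this]
    have "((\<lambda>x. - (d x *\<^sub>R f (\<phi> x))) has_integral integral S f) I" by simp
    then show ?thesis by (rule has_integral_cong[THEN iffD1, rotated]) (use neg in auto)
  qed
  show ?thesis
    using target unfolding S_def[symmetric] I_def[symmetric] f_def[symmetric]
    by (rule has_integral_cong[THEN iffD1, rotated]) (use integrand in auto)
qed

end
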